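(* Let $g:\mathbb{R}^m\to\overline{\mathbb{R}}$ be a polyhedral function and $(\bar z,\bar\lambda)\in\mathrm{gph}\,\partial g$. Then its strict second subderivative is $${\rm d}_s^2 g(\bar z,\bar\lambda)(w)=\delta_{K_g(\bar z,\bar\lambda)-K_g(\bar z,\bar\lambda)}(w)\quad\text{for all } w\in\mathbb{R}^m.$$
   Context: A proper function $g:\mathbb{R}^m\to\overline{\mathbb{R}}$ is polyhedral if its epigraph is a polyhedral convex set; $\partial g$ is the convex-analysis subdifferential; $\delta_C$ is the indicator function of $C$. For $z$ with $g(z)$ finite, ${\rm d} g(z)(w)=\liminf_{t\searrow 0,\,w'\to w}\frac{g(z+tw')-g(z)}{t}$ and for $\lambda\in\partial g(z)$ the critical cone is $K_g(z,\lambda)=\{w\mid\langle\lambda,w\rangle={\rm d} g(z)(w)\}$. For $f:\mathbb{R}^n\to\overline{\mathbb{R}}$, $f(x)$ finite, $v\in\partial f(x)$ and $t>0$, the second-order difference quotient is $\Delta_t^2 f(x,v)(w)=\frac{f(x+tw)-f(x)-t\langle v,w\rangle}{\frac12 t^2}$. The strict second subderivative at $\bar x$ for $\bar v\in\partial f(\bar x)$ is ${\rm d}_s^2 f(\bar x,\bar v)(w)=\liminf \Delta_t^2 f(x,v)(w')$, the liminf taken as $t\searrow0$, $w'\to w$, $(x,v)\to(\bar x,\bar v)$ with $(x,v)\in\mathrm{gph}\,\partial f$ and $f(x)\to f(\bar x)$. *)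

theory Defs
  imports "HOL-Analysis.Analysis" "HOL-Library.Extended_Real"
begin

definition proper_fun :: "('a \<Rightarrow> ereal) \<Rightarrow> bool" where
  "proper_fun g \<longleftrightarrow> (\<forall>x. g x \<noteq> -\<infinity>) \<and> (\<exists>x. g x \<noteq> \<infinity>)"

definition epigraph :: "('a \<Rightarrow> ereal) \<Rightarrow> ('a \<times> real) set" where
  "epigraph g = {(x, t). g x \<le> ereal t}"

definition polyhedral_fun :: "('a::euclidean_space \<Rightarrow> ereal) \<Rightarrow> bool" where
  "polyhedral_fun g \<longleftrightarrow> proper_fun g \<and> polyhedron (epigraph g)"

definition subdiff :: "('a::real_inner \<Rightarrow> ereal) \<Rightarrow> 'a \<Rightarrow> 'a set" where
  "subdiff g x = {v. \<bar>g x\<bar> \<noteq> \<infinity> \<and> (\<forall>y. g y \<ge> g x + ereal (v \<bullet> (y - x)))}"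

definition gph_subdiff :: "('a::real_inner \<Rightarrow> ereal) \<Rightarrow> ('a \<times> 'a) set" where
  "gph_subdiff g = {(x, v). v \<in> subdiff g x}"

definition indicator_fun :: "'a set \<Rightarrow> 'a \<Rightarrow> ereal" where
  "indicator_fun C w = (if w \<in> C then 0 else \<infinity>)"

definition subderiv :: "('a::real_normed_vector \<Rightarrow> ereal) \<Rightarrow> 'a \<Rightarrow> 'a \<Rightarrow> ereal" where
  "subderiv g z w = Liminf (at_right (0::real) \<times>\<^sub>F nhds w)
      (\<lambda>(t, w'). (g (z + t *\<^sub>R w') - g z) / ereal t)"

definition critical_cone :: "('a::real_inner \<Rightarrow> ereal) \<Rightarrow> 'a \<Rightarrow> 'a \<Rightarrow> 'a set" where
  "critical_cone g z lam = {w. ereal (lam \<bullet> w) = subderiv g z w}"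

definition second_diff_quot :: "('a::real_inner \<Rightarrow> ereal) \<Rightarrow> 'a \<Rightarrow> 'a \<Rightarrow> real \<Rightarrow> 'a \<Rightarrow> ereal" where
  "second_diff_quot f x v t w = (f (x + t *\<^sub>R w) - f x - ereal (t * (v \<bullet> w))) / ereal (t\<^sup>2 / 2)"

definition attentive_filter :: "('a::real_inner \<Rightarrow> ereal) \<Rightarrow> 'a \<Rightarrow> 'a \<Rightarrow> ('a \<times> 'a) filter" where
  "attentive_filter f xb vb = inf (inf (nhds (xb, vb)) (principal (gph_subdiff f)))
       (filtercomap (\<lambda>(x, v). f x) (nhds (f xb)))"

definition strict_second_subderiv :: "('a::real_inner \<Rightarrow> ereal) \<Rightarrow> 'a \<Rightarrow> 'a \<Rightarrow> 'a \<Rightarrow> ereal" where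
  "strict_second_subderiv f xb vb w =
     Liminf ((at_right (0::real) \<times>\<^sub>F nhds w) \<times>\<^sub>F attentive_filter f xb vb)
       (\<lambda>((t, w'), (x, v)). second_diff_quot f x v t w')"

end

theory Submission
  imports Defs
begin


definition hm :: "'a::real_inner set \<Rightarrow> 'a \<Rightarrow> real" where
  "hm C h = Max ((\<lambda>c. c \<bullet> h) ` C)"
definition inT :: "'a::real_inner set \<Rightarrow> 'a \<Rightarrow> bool" where
  "inT Ds h \<longleftrightarrow> (\<forall>d\<in>Ds. d \<bullet> h \<le> 0)"
definition HF :: "'a::real_inner set \<Rightarrow> 'a set \<Rightarrow> 'a \<Rightarrow> ereal" where
  "HF C Ds h = (if inT Ds h then ereal (hm C h) else \<infinity>)"
definition PF :: "('a::real_inner \<times> real) set \<Rightarrow> ('a \<times> real) set \<Rightarrow> 'a \<Rightarrow> ereal" where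
  "PF A B x = (if (\<forall>(p,b)\<in>B. p \<bullet> x \<le> b) then ereal (Max ((\<lambda>(c,\<gamma>). c \<bullet> x + \<gamma>) ` A)) else \<infinity>)"

lemma ereal_eqI_le:
  fixes a b :: ereal
  assumes "a \<noteq> -\<infinity>" "b \<noteq> -\<infinity>" "\<And>t. a \<le> ereal t \<longleftrightarrow> b \<le> ereal t"
  shows "a = b"
proof (rule ccontr)
  assume "a \<noteq> b"
  then consider "a < b" | "b < a" by fastforce
  then show False
  proof cases
    case 1
    then obtain r where "a < ereal r" "ereal r < b" using ereal_dense2 by blast
    then show False using assms(3)[of r] by auto
  next
    case 2
    then obtain r where "b < ereal r" "ereal r < a" using ereal_dense2 by blast
    then show False using assms(3)[of r] by auto
  qed
qed

lemma polyhedral_rep: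
  fixes g :: "'a::euclidean_space \<Rightarrow> ereal"
  assumes "polyhedral_fun g"
  shows "\<exists>A B. finite A \<and> A \<noteq> {} \<and> finite B \<and> (\<forall>x. g x = PF A B x)"
proof -
  have pr: "proper_fun g" and ph: "polyhedron (epigraph g)"
    using assms unfolding polyhedral_fun_def by auto
  obtain F where F: "finite F" "epigraph g = \<Inter>F"
    "\<forall>h\<in>F. \<exists>a b. a \<noteq> 0 \<and> h = {x. a \<bullet> x \<le> b}"
    using ph unfolding polyhedron_def by (elim exE conjE) (rule that; assumption)
  define hs where "hs h = (SOME ab. h = {x. fst ab \<bullet> x \<le> snd ab})" for h :: "('a \<times> real) set"
  have hs: "h = {x. fst (hs h) \<bullet> x \<le> snd (hs h)}" if hF: "h \<in> F" for h
  proof -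
    obtain a b where "h = {x. a \<bullet> x \<le> b}" using bspec[OF F(3) hF] by (elim exE conjE)
    then have "\<exists>ab. h = {x. fst ab \<bullet> x \<le> snd ab}" by (intro exI[of _ "(a,b)"]) auto
    then show ?thesis unfolding hs_def by (rule someI_ex)
  qed
  define P where "P = hs ` F"
  have finP: "finite P" using F(1) P_def by auto
  have epi: "g x \<le> ereal t \<longleftrightarrow> (\<forall>((p,q),b)\<in>P. p \<bullet> x + q * t \<le> b)" for x t
  proof -
    have "g x \<le> ereal t \<longleftrightarrow> (x,t) \<in> epigraph g" unfolding epigraph_def by auto
    also have "\<dots> \<longleftrightarrow> (\<forall>h\<in>F. (x,t) \<in> h)" using F(2) by auto
    also have "\<dots> \<longleftrightarrow> (\<forall>h\<in>F. fst (hs h) \<bullet> (x,t) \<le> snd (hs h))"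
    proof -
      have gen: "(x,t) \<in> S \<longleftrightarrow> fst ab \<bullet> (x,t) \<le> snd ab" if "S = {x. fst ab \<bullet> x \<le> snd ab}" for S ab
        using that by auto
      show ?thesis using gen[OF hs] by blast
    qed
    also have "\<dots> \<longleftrightarrow> (\<forall>((p,q),b)\<in>P. p \<bullet> x + q * t \<le> b)"
      unfolding P_def by (auto simp: split_beta inner_prod_def)
    finally show ?thesis .
  qed
  obtain x0 where x0: "g x0 \<noteq> \<infinity>" using pr unfolding proper_fun_def by auto
  have "g x0 \<noteq> -\<infinity>" using pr unfolding proper_fun_def by auto
  then obtain t0 where t0: "g x0 = ereal t0" using x0 by (cases "g x0") auto
  have qle: "q \<le> 0" if "((p,q),b) \<in> P" for p q b
  proof (rule ccontr)
    assume "\<not> q \<le> 0"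
    then have q: "q > 0" by simp
    define n where "n = max 0 ((b - p \<bullet> x0 - q * t0) / q + 1)"
    have "g x0 \<le> ereal (t0 + n)" using t0 n_def by auto
    then have "p \<bullet> x0 + q * (t0 + n) \<le> b" using epi[of x0 "t0+n"] that by auto
    moreover have "q * n \<ge> b - p \<bullet> x0 - q * t0 + q"
    proof -
      have "n \<ge> (b - p \<bullet> x0 - q * t0) / q + 1" unfolding n_def by simp
      then have "q * n \<ge> q * ((b - p \<bullet> x0 - q * t0) / q + 1)" using q by (simp add: mult_left_mono)
      also have "q * ((b - p \<bullet> x0 - q * t0) / q + 1) = b - p \<bullet> x0 - q * t0 + q"
        using q by (simp add: field_simps)
      finally show ?thesis by simp
    qed
    ultimately show False using q by (simp add: algebra_simps)
  qed
  define A where "A = (\<lambda>((p,q),b). ((-(1/q)) *\<^sub>R p, b / q)) ` {z\<in>P. snd (fst z) < 0}"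
  define B where "B = (\<lambda>((p,q),b). (p, b)) ` {z\<in>P. snd (fst z) = 0}"
  have finA: "finite A" and finB: "finite B" using finP unfolding A_def B_def by auto
  have epi2: "g x \<le> ereal t \<longleftrightarrow> (\<forall>(p,b)\<in>B. p \<bullet> x \<le> b) \<and> (\<forall>(c,\<gamma>)\<in>A. c \<bullet> x + \<gamma> \<le> t)" for x t
  proof -
    have neg: "p \<bullet> x + q * t \<le> b \<longleftrightarrow> (-(1/q)) *\<^sub>R p \<bullet> x + b / q \<le> t" if "q < 0" for p q b
    proof -
      have "p \<bullet> x + q * t \<le> b \<longleftrightarrow> q * t \<le> b - p \<bullet> x" by auto
      also have "\<dots> \<longleftrightarrow> (b - p \<bullet> x) / q \<le> t" using that by (simp add: neg_divide_le_eq mult.commute)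
      also have "(b - p \<bullet> x) / q = (-(1/q)) *\<^sub>R p \<bullet> x + b / q" using that by (simp add: diff_divide_distrib)
      finally show ?thesis .
    qed
    have "g x \<le> ereal t \<longleftrightarrow> (\<forall>((p,q),b)\<in>P. p \<bullet> x + q * t \<le> b)" by (rule epi)
    also have "\<dots> \<longleftrightarrow> (\<forall>((p,q),b)\<in>P. (q = 0 \<longrightarrow> p \<bullet> x \<le> b) \<and> (q < 0 \<longrightarrow> (-(1/q)) *\<^sub>R p \<bullet> x + b / q \<le> t))"
    proof -
      have *: "p \<bullet> x + q * t \<le> b \<longleftrightarrow> (q = 0 \<longrightarrow> p \<bullet> x \<le> b) \<and> (q < 0 \<longrightarrow> (-(1/q)) *\<^sub>R p \<bullet> x + b / q \<le> t)"
        if "((p,q),b)\<in>P" for p q b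
        using qle[OF that] neg[of q p b] by (cases "q = 0") auto
      show ?thesis
      proof (intro ball_cong refl)
        fix z assume "z \<in> P"
        then show "(case z of (x1, b) \<Rightarrow> (case x1 of (p, q) \<Rightarrow> \<lambda>b. p \<bullet> x + q * t \<le> b) b) =
          (case z of (x1, b) \<Rightarrow> (case x1 of (p, q) \<Rightarrow> \<lambda>b. (q = 0 \<longrightarrow> p \<bullet> x \<le> b) \<and> (q < 0 \<longrightarrow> (-(1/q)) *\<^sub>R p \<bullet> x + b / q \<le> t)) b)"
          using * by (cases z) auto
      qed
    qed
    also have "\<dots> \<longleftrightarrow> (\<forall>(p,b)\<in>B. p \<bullet> x \<le> b) \<and> (\<forall>(c,\<gamma>)\<in>A. c \<bullet> x + \<gamma> \<le> t)"
      unfolding A_def B_def by (auto simp: split_beta)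
    finally show ?thesis .
  qed
  have Ane: "A \<noteq> {}"
  proof
    assume "A = {}"
    have "\<forall>(p,b)\<in>B. p \<bullet> x0 \<le> b" using epi2[of x0 t0] t0 by auto
    then have "g x0 \<le> ereal (t0 - 1)" using epi2[of x0 "t0 - 1"] \<open>A = {}\<close> by auto
    then show False using t0 by auto
  qed
  have "g x = PF A B x" for x
  proof (cases "\<forall>(p,b)\<in>B. p \<bullet> x \<le> b")
    case True
    have "(\<forall>(c,\<gamma>)\<in>A. c \<bullet> x + \<gamma> \<le> t) \<longleftrightarrow> Max ((\<lambda>(c,\<gamma>). c \<bullet> x + \<gamma>) ` A) \<le> t" for t
      using finA Ane by (auto simp: Max_le_iff)
    then show ?thesis using True epi2[of x] pr unfolding PF_def proper_fun_def
      by (intro ereal_eqI_le) auto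
  next
    case False
    then have "\<not> g x \<le> ereal t" for t using epi2 by auto
    then have "g x = \<infinity>" using pr unfolding proper_fun_def
      by (metis MInfty_eq_minfinity ereal_cases order_refl)
    then show ?thesis using False unfolding PF_def by auto
  qed
  then show ?thesis using finA finB Ane by blast
qed


lemma finite_radius:
  fixes R :: "'b \<Rightarrow> 'a::real_normed_vector \<Rightarrow> bool"
  assumes "finite X" "\<forall>x\<in>X. \<exists>e>0. \<forall>h. norm h < e \<longrightarrow> R x h"
  shows "\<exists>e>0. \<forall>x\<in>X. \<forall>h. norm h < e \<longrightarrow> R x h"
  using assms
proof (induction X rule: finite_induct)
  case empty
  then show ?case by (intro exI[of _ 1]) auto
next
  case (insert x F)
  then obtain e1 where e1: "e1 > 0" "\<forall>x\<in>F. \<forall>h. norm h < e1 \<longrightarrow> R x h" by auto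
  obtain e2 where e2: "e2 > 0" "\<forall>h. norm h < e2 \<longrightarrow> R x h" using insert.prems by auto
  show ?case using e1 e2 by (intro exI[of _ "min e1 e2"]) auto
qed

lemma PF_local:
  fixes A B :: "('a::real_inner \<times> real) set" and y :: 'a
  assumes finA: "finite A" and Ane: "A \<noteq> {}" and finB: "finite B"
    and yD: "\<forall>(p,b)\<in>B. p \<bullet> y \<le> b"
  defines "m \<equiv> Max ((\<lambda>(c,\<gamma>). c \<bullet> y + \<gamma>) ` A)"
  defines "I \<equiv> {z\<in>A. fst z \<bullet> y + snd z = m}"
  defines "S \<equiv> {z\<in>B. fst z \<bullet> y = snd z}"
  shows "I \<noteq> {}" "PF A B y = ereal m"
    "\<exists>r>0. \<forall>h. norm h < r \<longrightarrow> PF A B (y + h) = ereal m + HF (fst ` I) (fst ` S) h"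
proof -
  define f where "f = (\<lambda>(c,\<gamma>). c \<bullet> y + \<gamma>)"
  have "m \<in> f ` A" unfolding m_def f_def using finA Ane by (intro Max_in) auto
  then obtain i0 where i0A: "i0 \<in> A" and i0m: "f i0 = m" by auto
  have i0I: "i0 \<in> I" using i0A i0m unfolding I_def f_def by (auto simp: split_beta)
  then show "I \<noteq> {}" by auto
  show "PF A B y = ereal m" using yD unfolding PF_def m_def by auto
  have fle: "f z \<le> m" if "z \<in> A" for z unfolding m_def f_def using finA that by auto
  have r1: "\<exists>e>0. \<forall>h. norm h < e \<longrightarrow> fst z \<bullet> (y+h) + snd z \<le> fst i0 \<bullet> (y+h) + snd i0"
    if "z \<in> A - I" for z
  proof -
    define gap where "gap = m - f z"
    have gp: "gap > 0" using fle[of z] that unfolding gap_def I_def f_def by (auto simp: split_beta)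
    show ?thesis
    proof (intro exI[of _ "gap / (norm (fst z - fst i0) + 1)"] conjI allI impI)
      show "gap / (norm (fst z - fst i0) + 1) > 0" using gp norm_ge_zero[of "fst z - fst i0"] by (intro divide_pos_pos) linarith+
      fix h :: 'a assume h: "norm h < gap / (norm (fst z - fst i0) + 1)"
      have "(fst z - fst i0) \<bullet> h \<le> norm (fst z - fst i0) * norm h" by (rule norm_cauchy_schwarz)
      also have "\<dots> \<le> (norm (fst z - fst i0) + 1) * norm h" by (simp add: mult_right_mono)
      also have "\<dots> \<le> gap" using h by (simp add: field_simps add_pos_nonneg)
      finally have "(fst z - fst i0) \<bullet> h \<le> gap" .
      then show "fst z \<bullet> (y+h) + snd z \<le> fst i0 \<bullet> (y+h) + snd i0"
        using i0m unfolding gap_def f_def by (auto simp: split_beta inner_diff_left inner_add_right)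
    qed
  qed
  have r2: "\<exists>e>0. \<forall>h. norm h < e \<longrightarrow> fst z \<bullet> (y+h) \<le> snd z"
    if "z \<in> B - S" for z
  proof -
    define gap where "gap = snd z - fst z \<bullet> y"
    have gp: "gap > 0" using yD that unfolding gap_def S_def by (auto simp: split_beta)
    show ?thesis
    proof (intro exI[of _ "gap / (norm (fst z) + 1)"] conjI allI impI)
      show "gap / (norm (fst z) + 1) > 0" using gp norm_ge_zero[of "fst z"] by (intro divide_pos_pos) linarith+
      fix h :: 'a assume h: "norm h < gap / (norm (fst z) + 1)"
      have "fst z \<bullet> h \<le> norm (fst z) * norm h" by (rule norm_cauchy_schwarz)
      also have "\<dots> \<le> (norm (fst z) + 1) * norm h" by (simp add: mult_right_mono)
      also have "\<dots> \<le> gap" using h by (simp add: field_simps add_pos_nonneg)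
      finally show "fst z \<bullet> (y+h) \<le> snd z" unfolding gap_def by (simp add: inner_add_right)
    qed
  qed
  have "\<exists>e>0. \<forall>z\<in>A - I. \<forall>h. norm h < e \<longrightarrow> fst z \<bullet> (y+h) + snd z \<le> fst i0 \<bullet> (y+h) + snd i0"
    by (rule finite_radius) (use finA r1 in auto)
  then obtain e1 where e1: "e1 > 0" "\<forall>z\<in>A - I. \<forall>h. norm h < e1 \<longrightarrow> fst z \<bullet> (y+h) + snd z \<le> fst i0 \<bullet> (y+h) + snd i0"
    by blast
  have "\<exists>e>0. \<forall>z\<in>B - S. \<forall>h. norm h < e \<longrightarrow> fst z \<bullet> (y+h) \<le> snd z"
    by (rule finite_radius) (use finB r2 in auto)
  then obtain e2 where e2: "e2 > 0" "\<forall>z\<in>B - S. \<forall>h. norm h < e2 \<longrightarrow> fst z \<bullet> (y+h) \<le> snd z"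
    by blast
  show "\<exists>r>0. \<forall>h. norm h < r \<longrightarrow> PF A B (y + h) = ereal m + HF (fst ` I) (fst ` S) h"
  proof (intro exI[of _ "min e1 e2"] conjI allI impI)
    show "min e1 e2 > 0" using e1 e2 by auto
    fix h :: 'a assume h: "norm h < min e1 e2"
    have dom: "(\<forall>(p,b)\<in>B. p \<bullet> (y+h) \<le> b) \<longleftrightarrow> inT (fst ` S) h"
    proof
      assume "\<forall>(p,b)\<in>B. p \<bullet> (y+h) \<le> b"
      then show "inT (fst ` S) h" unfolding inT_def S_def by (auto simp: inner_add_right)
    next
      assume a: "inT (fst ` S) h"
      show "\<forall>(p,b)\<in>B. p \<bullet> (y+h) \<le> b"
      proof (clarify)
        fix p b assume pb: "(p,b) \<in> B"
        show "p \<bullet> (y+h) \<le> b"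
        proof (cases "(p,b) \<in> S")
          case True
          then show ?thesis using a unfolding inT_def S_def by (force simp: inner_add_right)
        next
          case False
          have "norm h < e2" using h by simp
          then show ?thesis using bspec[OF e2(2), of "(p,b)"] pb False by simp
        qed
      qed
    qed
    define fh where "fh = (\<lambda>(c,\<gamma>). c \<bullet> (y+h) + \<gamma>)"
    have finI: "finite I" using finA unfolding I_def by auto
    have IA: "I \<subseteq> A" unfolding I_def by auto
    have maxeq: "Max (fh ` A) = Max (fh ` I)"
    proof (rule antisym)
      show "Max (fh ` A) \<le> Max (fh ` I)"
      proof (subst Max_le_iff)
        show "finite (fh ` A)" "fh ` A \<noteq> {}" using finA Ane by auto
        show "\<forall>a\<in>fh ` A. a \<le> Max (fh ` I)"
        proof
          fix a assume "a \<in> fh ` A"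
          then obtain z where z: "z \<in> A" "a = fh z" by auto
          have "fh i0 \<le> Max (fh ` I)" using finI i0I by auto
          moreover have "fh z \<le> fh i0" if "z \<notin> I"
          proof -
            have "norm h < e1" using h by simp
            then show ?thesis using bspec[OF e1(2), of z] z that unfolding fh_def by (simp add: split_beta)
          qed
          moreover have "fh z \<le> Max (fh ` I)" if "z \<in> I" using finI that by auto
          ultimately show "a \<le> Max (fh ` I)" using z by fastforce
        qed
      qed
    next
      show "Max (fh ` I) \<le> Max (fh ` A)" using IA finA i0I by (intro Max_mono) auto
    qed
    have fhI: "fh z = m + fst z \<bullet> h" if "z \<in> I" for z
      using that unfolding fh_def I_def by (auto simp: split_beta inner_add_right)
    have "fh ` I = (\<lambda>c. m + c \<bullet> h) ` fst ` I" unfolding image_image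
      by (rule image_cong[OF refl]) (rule fhI)
    then have "Max (fh ` I) = m + hm (fst ` I) h"
      unfolding hm_def using Max_add_commute[of "fst ` I" "\<lambda>c. c \<bullet> h" m] finI i0I
      by (auto simp: add.commute)
    then show "PF A B (y + h) = ereal m + HF (fst ` I) (fst ` S) h"
      unfolding PF_def HF_def using dom maxeq unfolding fh_def by auto
  qed
qed


lemma hm_ge: "finite C \<Longrightarrow> c \<in> C \<Longrightarrow> c \<bullet> h \<le> hm C h"
  unfolding hm_def by auto

lemma hm_in: "finite C \<Longrightarrow> C \<noteq> {} \<Longrightarrow> \<exists>c\<in>C. hm C h = c \<bullet> h"
proof -
  assume a: "finite C" "C \<noteq> {}"
  have "Max ((\<lambda>c. c \<bullet> h) ` C) \<in> (\<lambda>c. c \<bullet> h) ` C" using a by (intro Max_in) auto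
  then show ?thesis unfolding hm_def by auto
qed

lemma hm_le_iff: "finite C \<Longrightarrow> C \<noteq> {} \<Longrightarrow> hm C h \<le> a \<longleftrightarrow> (\<forall>c\<in>C. c \<bullet> h \<le> a)"
  unfolding hm_def by auto

lemma hm_scale:
  assumes "finite C" "C \<noteq> {}" "s \<ge> 0"
  shows "hm C (s *\<^sub>R h) = s * hm C h"
proof -
  obtain c where c: "c \<in> C" "hm C h = c \<bullet> h" using hm_in assms by blast
  obtain c' where c': "c' \<in> C" "hm C (s *\<^sub>R h) = c' \<bullet> (s *\<^sub>R h)" using hm_in assms by blast
  have "c' \<bullet> h \<le> hm C h" using hm_ge assms c' by auto
  then have "hm C (s *\<^sub>R h) \<le> s * hm C h" using c' assms by (simp add: mult_left_mono)
  moreover have "s * hm C h \<le> hm C (s *\<^sub>R h)" using c hm_ge[OF assms(1) c(1), of "s *\<^sub>R h"] by simp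
  ultimately show ?thesis by simp
qed

lemma hm_add:
  assumes "finite C" "C \<noteq> {}"
  shows "hm C (a + b) \<le> hm C a + hm C b"
proof -
  obtain c where c: "c \<in> C" "hm C (a + b) = c \<bullet> (a + b)" using hm_in assms by blast
  then show ?thesis using hm_ge[OF assms(1) c(1), of a] hm_ge[OF assms(1) c(1), of b]
    by (simp add: inner_add_right)
qed

lemma hm_zero: "finite C \<Longrightarrow> C \<noteq> {} \<Longrightarrow> hm C 0 = 0"
  using hm_scale[of C 0 0] by simp

lemma inT_scale: "s \<ge> 0 \<Longrightarrow> inT Ds h \<Longrightarrow> inT Ds (s *\<^sub>R h)"
  unfolding inT_def by (simp add: mult_nonneg_nonpos)

lemma inT_scale_iff: "s > 0 \<Longrightarrow> inT Ds (s *\<^sub>R h) \<longleftrightarrow> inT Ds h"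
  unfolding inT_def by (simp add: mult_le_0_iff)

lemma inT_add: "inT Ds a \<Longrightarrow> inT Ds b \<Longrightarrow> inT Ds (a + b)"
  unfolding inT_def by (simp add: inner_add_right add_nonpos_nonpos)

lemma HF_scale:
  assumes "finite C" "C \<noteq> {}" "s > 0"
  shows "HF C Ds (s *\<^sub>R h) = ereal s * HF C Ds h"
  using assms inT_scale_iff[OF assms(3)] hm_scale[OF assms(1,2), of s h]
  unfolding HF_def by auto

lemma hm_shift:
  assumes "finite C" "C \<noteq> {}"
  shows "hm ((\<lambda>c. c - l) ` C) h = hm C h - l \<bullet> h"
proof -
  have "(\<lambda>c. c \<bullet> h) ` (\<lambda>c. c - l) ` C = (\<lambda>c. c \<bullet> h + (- (l \<bullet> h))) ` C"
    unfolding image_image by (simp add: inner_diff_left)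
  then show ?thesis unfolding hm_def using Max_add_commute[OF assms, of "\<lambda>c. c \<bullet> h" "- (l \<bullet> h)"]
    by simp
qed

lemma HF_local:
  fixes C Ds :: "'a::real_inner set"
  assumes finC: "finite C" and Cne: "C \<noteq> {}" and finD: "finite Ds" and u: "inT Ds u"
  shows "\<exists>r>0. \<forall>h. norm h < r \<longrightarrow>
    HF C Ds (u + h) = ereal (hm C u) + HF {c\<in>C. c \<bullet> u = hm C u} {d\<in>Ds. d \<bullet> u = 0} h"
proof -
  define A where "A = (\<lambda>c. (c, 0::real)) ` C"
  define B where "B = (\<lambda>d. (d, 0::real)) ` Ds"
  have PF_eq: "HF C Ds x = PF A B x" for x
  proof -
    have "(\<lambda>(c,\<gamma>). c \<bullet> x + \<gamma>) ` A = (\<lambda>c. c \<bullet> x) ` C" unfolding A_def image_image by simp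
    moreover have "(\<forall>(p,b)\<in>B. p \<bullet> x \<le> b) \<longleftrightarrow> inT Ds x" unfolding B_def inT_def by auto
    ultimately show ?thesis unfolding HF_def PF_def hm_def by simp
  qed
  have finA: "finite A" "A \<noteq> {}" "finite B" using finC Cne finD unfolding A_def B_def by auto
  have yD: "\<forall>(p,b)\<in>B. p \<bullet> u \<le> b" using u unfolding B_def inT_def by auto
  have m: "Max ((\<lambda>(c,\<gamma>). c \<bullet> u + \<gamma>) ` A) = hm C u"
    unfolding A_def image_image hm_def by simp
  have I: "fst ` {z\<in>A. fst z \<bullet> u + snd z = hm C u} = {c\<in>C. c \<bullet> u = hm C u}"
    unfolding A_def by force
  have S: "fst ` {z\<in>B. fst z \<bullet> u = snd z} = {d\<in>Ds. d \<bullet> u = 0}"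
    unfolding B_def by force
  show ?thesis using PF_local(3)[OF finA yD] unfolding m I S PF_eq[symmetric] by simp
qed


lemma small_scale:
  fixes h :: "'a::real_normed_vector"
  assumes "r > 0"
  shows "\<exists>s>0. norm (s *\<^sub>R h) < r"
proof -
  define s where "s = r / (2 * (norm h + 1))"
  have np: "norm h + 1 > 0" using norm_ge_zero[of h] by linarith
  have sp: "s > 0" unfolding s_def using assms np by simp
  have "norm (s *\<^sub>R h) = s * norm h" using sp by simp
  also have "\<dots> \<le> s * (norm h + 1)" using sp by simp
  also have "\<dots> = r / 2" unfolding s_def using np by (simp add: field_simps)
  also have "\<dots> < r" using assms by simp
  finally show ?thesis using sp by blast
qed

lemma subdiffD:
  assumes "v \<in> subdiff g x"
  shows "\<bar>g x\<bar> \<noteq> \<infinity>" "g y \<ge> g x + ereal (v \<bullet> (y - x))"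
  using assms unfolding subdiff_def by auto

lemma loc_setup:
  fixes g :: "'a::euclidean_space \<Rightarrow> ereal"
  assumes pg: "polyhedral_fun g" and hgph: "(zb, lb) \<in> gph_subdiff g"
  obtains C Ds r gz where "finite C" "C \<noteq> {}" "finite Ds" "r > 0" "g zb = ereal gz"
    "\<forall>h. norm h < r \<longrightarrow> g (zb + h) = ereal (gz + lb \<bullet> h) + HF C Ds h"
    "\<forall>h. inT Ds h \<longrightarrow> hm C h \<ge> 0"
proof -
  obtain A B where AB: "finite A" "A \<noteq> {}" "finite B" "\<forall>x. g x = PF A B x"
    using polyhedral_rep[OF pg] by blast
  have lbsub: "lb \<in> subdiff g zb" using hgph unfolding gph_subdiff_def by auto
  have fin: "\<bar>g zb\<bar> \<noteq> \<infinity>" using subdiffD(1)[OF lbsub] .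
  have yD: "\<forall>(p,b)\<in>B. p \<bullet> zb \<le> b"
  proof (rule ccontr)
    assume "\<not> (\<forall>(p,b)\<in>B. p \<bullet> zb \<le> b)"
    then have "g zb = \<infinity>" using AB(4) unfolding PF_def by auto
    then show False using fin by simp
  qed
  define m where "m = Max ((\<lambda>(c,\<gamma>). c \<bullet> zb + \<gamma>) ` A)"
  define I where "I = {z\<in>A. fst z \<bullet> zb + snd z = m}"
  define S where "S = {z\<in>B. fst z \<bullet> zb = snd z}"
  have Ine: "I \<noteq> {}" and gzb: "PF A B zb = ereal m"
    and loc: "\<exists>r>0. \<forall>h. norm h < r \<longrightarrow> PF A B (zb + h) = ereal m + HF (fst ` I) (fst ` S) h"
    using PF_local[OF AB(1,2,3) yD] unfolding m_def I_def S_def by blast+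
  obtain r where r: "r > 0" "\<forall>h. norm h < r \<longrightarrow> PF A B (zb + h) = ereal m + HF (fst ` I) (fst ` S) h"
    using loc by blast
  define C0 where "C0 = fst ` I"
  define Ds where "Ds = fst ` S"
  define C where "C = (\<lambda>c. c - lb) ` C0"
  have finC0: "finite C0" "C0 \<noteq> {}" using AB(1) Ine unfolding C0_def I_def by auto
  have finC: "finite C" "C \<noteq> {}" using finC0 unfolding C_def by auto
  have finDs: "finite Ds" using AB(3) unfolding Ds_def S_def by auto
  have HFshift: "HF C0 Ds h = ereal (lb \<bullet> h) + HF C Ds h" for h
    unfolding HF_def C_def using hm_shift[OF finC0, of lb h] by auto
  have rep: "g (zb + h) = ereal (m + lb \<bullet> h) + HF C Ds h" if "norm h < r" for h
  proof -
    have "g (zb + h) = ereal m + (ereal (lb \<bullet> h) + HF C Ds h)"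
      using r(2) that AB(4) HFshift unfolding C0_def Ds_def by simp
    then show ?thesis by (cases "HF C Ds h") auto
  qed
  have gz: "g zb = ereal m" using gzb AB(4) by simp
  have nn: "hm C h \<ge> 0" if "inT Ds h" for h
  proof -
    obtain s where s: "s > 0" "norm (s *\<^sub>R h) < r" using small_scale[OF r(1)] by blast
    have "g (zb + s *\<^sub>R h) \<ge> g zb + ereal (lb \<bullet> (zb + s *\<^sub>R h - zb))" by (rule subdiffD(2)[OF lbsub])
    then have "ereal (m + lb \<bullet> (s *\<^sub>R h)) + HF C Ds (s *\<^sub>R h) \<ge> ereal m + ereal (lb \<bullet> (s *\<^sub>R h))"
      using rep[OF s(2)] gz by simp
    moreover have "HF C Ds (s *\<^sub>R h) = ereal (s * hm C h)"
      unfolding HF_def using inT_scale[of s Ds h] s(1) that hm_scale[OF finC, of s h] by simp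
    ultimately have "s * hm C h \<ge> 0" by simp
    then show ?thesis using s(1) by (simp add: zero_le_mult_iff)
  qed
  show ?thesis using that[OF finC finDs r(1) gz] rep nn by blast
qed


lemma Liminf_le_frequently:
  fixes f :: "_ \<Rightarrow> 'b::complete_linorder"
  assumes "frequently (\<lambda>x. f x \<le> c) F"
  shows "Liminf F f \<le> c"
  unfolding Liminf_def
proof (rule SUP_least)
  fix P assume "P \<in> {P. eventually P F}"
  then have ev: "eventually P F" by simp
  have "\<exists>x. P x \<and> f x \<le> c"
  proof (rule ccontr)
    assume "\<not> (\<exists>x. P x \<and> f x \<le> c)"
    then have "eventually (\<lambda>x. \<not> f x \<le> c) F" using ev by (auto elim: eventually_mono)
    then show False using assms unfolding frequently_def by simp
  qed
  then obtain x where "P x" "f x \<le> c" by blast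
  then show "(INF x\<in>Collect P. f x) \<le> c" by (intro INF_lower2[of x]) auto
qed

lemma eventually_prodI2:
  assumes "eventually P F" "eventually Q G"
  shows "eventually (\<lambda>z. P (fst z) \<and> Q (snd z)) (F \<times>\<^sub>F G)"
  unfolding eventually_prod_filter using assms by (intro exI[of _ P] exI[of _ Q]) auto

lemma frequently_prodI:
  assumes "\<And>Pf Pg. eventually Pf F \<Longrightarrow> eventually Pg G \<Longrightarrow> \<exists>x y. Pf x \<and> Pg y \<and> P (x, y)"
  shows "frequently P (F \<times>\<^sub>F G)"
  unfolding frequently_def eventually_prod_filter using assms by blast

lemma inner_tendsto_nhds: "((\<lambda>w'. l \<bullet> w') \<longlongrightarrow> l \<bullet> w) (nhds w)"
  by (intro tendsto_intros filterlim_ident)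

lemma ev_inner_gt: "l \<bullet> w > a \<Longrightarrow> eventually (\<lambda>w'. l \<bullet> w' > a) (nhds w)"
  using order_tendstoD(1)[OF inner_tendsto_nhds] by blast

lemma ev_norm_lt: "eventually (\<lambda>w'. norm w' < norm w + 1) (nhds w)"
proof -
  have "((\<lambda>w'. norm w') \<longlongrightarrow> norm w) (nhds w)" by (intro tendsto_intros filterlim_ident)
  then show ?thesis using order_tendstoD(2) by force
qed

lemma quot1:
  assumes "t > 0" "X \<noteq> -\<infinity>"
  shows "(ereal (gz + t * l) + ereal t * X - ereal gz) / ereal t = ereal l + X"
proof (cases X)
  case (real a)
  have "(gz + t * l + t * a - gz) / t = l + a" using assms(1) by (simp add: field_simps)
  then show ?thesis using real assms(1) by simp
next
  case PInf
  then show ?thesis using assms by simp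
next
  case MInf
  then show ?thesis using assms by simp
qed

lemma crit_char:
  fixes g :: "'a::euclidean_space \<Rightarrow> ereal"
  assumes finC: "finite C" "C \<noteq> {}" and finD: "finite Ds" and r: "r > 0"
    and gz: "g zb = ereal gz"
    and rep: "\<forall>h. norm h < r \<longrightarrow> g (zb + h) = ereal (gz + lb \<bullet> h) + HF C Ds h"
    and nn: "\<forall>h. inT Ds h \<longrightarrow> hm C h \<ge> 0"
  shows "critical_cone g zb lb = {w. inT Ds w \<and> hm C w \<le> 0}"
proof -
  have HFnn: "HF C Ds h \<ge> 0" for h using nn unfolding HF_def by auto
  have key: "eventually (\<lambda>(t,w'). (g (zb + t *\<^sub>R w') - g zb) / ereal t = ereal (lb \<bullet> w') + HF C Ds w')
      (at_right (0::real) \<times>\<^sub>F nhds w)" for w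
  proof -
    have e1: "eventually (\<lambda>t. t \<in> {0<..<r / (norm w + 1)}) (at_right (0::real))"
      using r by (intro eventually_at_right_real) (simp add: add_nonneg_pos)
    have "eventually (\<lambda>z. fst z \<in> {0<..<r / (norm w + 1)} \<and> norm (snd z) < norm w + 1) (at_right (0::real) \<times>\<^sub>F nhds w)"
      by (rule eventually_prodI2[OF e1 ev_norm_lt])
    then show ?thesis
    proof (rule eventually_mono)
      fix z :: "real \<times> 'a" assume a: "fst z \<in> {0<..<r / (norm w + 1)} \<and> norm (snd z) < norm w + 1"
      obtain t w' where z: "z = (t, w')" by (cases z)
      have t: "t > 0" "t < r / (norm w + 1)" using a z by auto
      have np: "norm w + 1 > 0" using norm_ge_zero[of w] by linarith
      have "norm (t *\<^sub>R w') = t * norm w'" using t by simp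
      also have "\<dots> \<le> t * (norm w + 1)" using a z t by (intro mult_left_mono) auto
      also have "\<dots> < r" using t np by (simp add: field_simps)
      finally have "norm (t *\<^sub>R w') < r" .
      then have "g (zb + t *\<^sub>R w') = ereal (gz + t * (lb \<bullet> w')) + ereal t * HF C Ds w'"
        using rep HF_scale[OF finC t(1)] by simp
      then have "(g (zb + t *\<^sub>R w') - g zb) / ereal t = ereal (lb \<bullet> w') + HF C Ds w'"
        using quot1[OF t(1), of "HF C Ds w'" gz "lb \<bullet> w'"] gz HFnn[of w'] by auto
      then show "case z of (t, w') \<Rightarrow> (g (zb + t *\<^sub>R w') - g zb) / ereal t = ereal (lb \<bullet> w') + HF C Ds w'"
        using z by simp
    qed
  qed
  have Fnb: "at_right (0::real) \<times>\<^sub>F nhds w \<noteq> bot" for w :: 'a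
    by (simp add: prod_filter_eq_bot)
  show ?thesis
  proof (intro set_eqI iffI)
    fix w assume w: "w \<in> critical_cone g zb lb"
    then have sd: "subderiv g zb w = ereal (lb \<bullet> w)" unfolding critical_cone_def by simp
    show "w \<in> {w. inT Ds w \<and> hm C w \<le> 0}"
    proof (rule ccontr)
      assume nw: "w \<notin> {w. inT Ds w \<and> hm C w \<le> 0}"
      have "subderiv g zb w > ereal (lb \<bullet> w)"
      proof (cases "inT Ds w")
        case False
        then obtain d where d: "d \<in> Ds" "d \<bullet> w > 0" unfolding inT_def by (auto simp: not_le)
        have "eventually (\<lambda>w'. d \<bullet> w' > 0) (nhds w)" using ev_inner_gt[OF d(2)] .
        then have "eventually (\<lambda>z. True \<and> d \<bullet> snd z > 0) (at_right (0::real) \<times>\<^sub>F nhds w)"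
          by (intro eventually_prodI2) auto
        then have "eventually (\<lambda>z. \<infinity> \<le> (case z of (t,w') \<Rightarrow> (g (zb + t *\<^sub>R w') - g zb) / ereal t)) (at_right (0::real) \<times>\<^sub>F nhds w)"
          using key[of w]
        proof (eventually_elim)
          case (elim z)
          then show ?case using d(1) unfolding HF_def inT_def by (auto simp: split_beta not_le)
        qed
        then have "\<infinity> \<le> subderiv g zb w" unfolding subderiv_def by (rule Liminf_bounded)
        then show ?thesis by simp
      next
        case True
        then have hp: "hm C w > 0" using nw by auto
        obtain c where c: "c \<in> C" "hm C w = c \<bullet> w" using hm_in finC by blast
        have "eventually (\<lambda>w'. c \<bullet> w' > hm C w / 2) (nhds w)" using ev_inner_gt[of "hm C w / 2" c w] c hp by simp
        moreover have "eventually (\<lambda>w'. lb \<bullet> w' > lb \<bullet> w - hm C w / 4) (nhds w)"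
          using ev_inner_gt[of "lb \<bullet> w - hm C w / 4" lb w] hp by simp
        ultimately have "eventually (\<lambda>w'. c \<bullet> w' > hm C w / 2 \<and> lb \<bullet> w' > lb \<bullet> w - hm C w / 4) (nhds w)"
          by (rule eventually_conj)
        then have "eventually (\<lambda>z. True \<and> (c \<bullet> snd z > hm C w / 2 \<and> lb \<bullet> snd z > lb \<bullet> w - hm C w / 4)) (at_right (0::real) \<times>\<^sub>F nhds w)"
          by (intro eventually_prodI2) auto
        then have "eventually (\<lambda>z. ereal (lb \<bullet> w + hm C w / 4) \<le> (case z of (t,w') \<Rightarrow> (g (zb + t *\<^sub>R w') - g zb) / ereal t)) (at_right (0::real) \<times>\<^sub>F nhds w)"
          using key[of w]
        proof (eventually_elim)
          case (elim z)
          obtain t w' where z: "z = (t, w')" by (cases z)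
          show ?case
          proof (cases "inT Ds w'")
            case True
            have "c \<bullet> w' \<le> hm C w'" using hm_ge[OF finC(1) c(1)] .
            then show ?thesis using elim z True unfolding HF_def by auto
          next
            case False
            then show ?thesis using elim z unfolding HF_def by auto
          qed
        qed
        then have "ereal (lb \<bullet> w + hm C w / 4) \<le> subderiv g zb w" unfolding subderiv_def
          by (rule Liminf_bounded)
        moreover have "ereal (lb \<bullet> w) < ereal (lb \<bullet> w + hm C w / 4)" using hp by simp
        ultimately show ?thesis by (meson less_le_trans)
      qed
      then show False using sd by simp
    qed
  next
    fix w assume "w \<in> {w. inT Ds w \<and> hm C w \<le> 0}"
    then have w: "inT Ds w" "hm C w = 0" using nn by force+
    have "subderiv g zb w \<le> ereal (lb \<bullet> w)" unfolding subderiv_def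
    proof (rule Liminf_le_frequently, rule frequently_prodI)
      fix Pf Pg assume ef: "eventually Pf (at_right (0::real))" and eg: "eventually Pg (nhds w)"
      have "eventually (\<lambda>z. Pf (fst z) \<and> Pg (snd z)) (at_right (0::real) \<times>\<^sub>F nhds w)"
        by (rule eventually_prodI2[OF ef eg])
      have "eventually (\<lambda>t. Pf t \<and> (g (zb + t *\<^sub>R w) - g zb) / ereal t = ereal (lb \<bullet> w) + HF C Ds w) (at_right (0::real))"
      proof -
        obtain Qf Qg where Q: "eventually Qf (at_right (0::real))" "eventually Qg (nhds w)"
          "\<forall>t w'. Qf t \<longrightarrow> Qg w' \<longrightarrow> (case (t,w') of (t,w') \<Rightarrow> (g (zb + t *\<^sub>R w') - g zb) / ereal t = ereal (lb \<bullet> w') + HF C Ds w')"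
          using key[of w] unfolding eventually_prod_filter by blast
        have "Qg w" using Q(2) by (rule eventually_nhds_x_imp_x)
        have "eventually (\<lambda>t. Pf t \<and> Qf t) (at_right 0)" using ef Q(1) by (rule eventually_conj)
        then show ?thesis
        proof (rule eventually_mono)
          fix t assume "Pf t \<and> Qf t"
          then show "Pf t \<and> (g (zb + t *\<^sub>R w) - g zb) / ereal t = ereal (lb \<bullet> w) + HF C Ds w"
            using Q(3) \<open>Qg w\<close> by simp
        qed
      qed
      then obtain t where t: "Pf t" "(g (zb + t *\<^sub>R w) - g zb) / ereal t = ereal (lb \<bullet> w) + HF C Ds w"
        using eventually_happens'[OF trivial_limit_at_right_real] by blast
      have "Pg w" using eg by (rule eventually_nhds_x_imp_x)
      then show "\<exists>x y. Pf x \<and> Pg y \<and> (case (x, y) of (t, w') \<Rightarrow> (g (zb + t *\<^sub>R w') - g zb) / ereal t) \<le> ereal (lb \<bullet> w)"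
        using t w unfolding HF_def by (intro exI[of _ t] exI[of _ w]) auto
    qed
    moreover have "subderiv g zb w \<ge> ereal (lb \<bullet> w)" unfolding subderiv_def le_Liminf_iff
    proof (intro allI impI)
      fix y assume y: "y < ereal (lb \<bullet> w)"
      obtain yr where yr0: "y < ereal yr" "ereal yr < ereal (lb \<bullet> w)" using ereal_dense2[OF y] by blast
      then have yr: "y < ereal yr" "yr < lb \<bullet> w" by auto
      have "eventually (\<lambda>z. True \<and> lb \<bullet> snd z > yr) (at_right (0::real) \<times>\<^sub>F nhds w)"
        using ev_inner_gt[OF yr(2)] by (intro eventually_prodI2) auto
      then show "eventually (\<lambda>x. y < (case x of (t, w') \<Rightarrow> (g (zb + t *\<^sub>R w') - g zb) / ereal t)) (at_right (0::real) \<times>\<^sub>F nhds w)"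
        using key[of w]
      proof (eventually_elim)
        case (elim z)
        obtain t w' where z: "z = (t, w')" by (cases z)
        have "ereal (lb \<bullet> w') \<le> ereal (lb \<bullet> w') + HF C Ds w'" using HFnn[of w'] by (simp add: ereal_le_add_self)
        moreover have "ereal yr < ereal (lb \<bullet> w')" using elim z by simp
        ultimately have "ereal yr < ereal (lb \<bullet> w') + HF C Ds w'" by (meson less_le_trans)
        then show ?case using elim z yr(1) by auto
      qed
    qed
    ultimately show "w \<in> critical_cone g zb lb" unfolding critical_cone_def by simp
  qed
qed




lemma sub_sep:
  fixes K :: "'a::euclidean_space set"
  assumes K0: "0 \<in> K" and Kadd: "\<forall>a\<in>K. \<forall>b\<in>K. a + b \<in> K" and Kmul: "\<forall>a\<in>K. \<forall>c\<ge>0. c *\<^sub>R a \<in> K"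
    and w: "w \<notin> {a - b | a b. a \<in> K \<and> b \<in> K}"
  shows "\<exists>e. e \<bullet> w = 1 \<and> (\<forall>k\<in>K. e \<bullet> k = 0)"
proof -
  define M where "M = {a - b | a b. a \<in> K \<and> b \<in> K}"
  have sub: "subspace M" unfolding subspace_def
  proof (intro conjI ballI allI)
    show "0 \<in> M" unfolding M_def using K0 by force
  next
    fix x y assume "x \<in> M" "y \<in> M"
    then obtain a b a' b' where "x = a - b" "y = a' - b'" "a \<in> K" "b \<in> K" "a' \<in> K" "b' \<in> K"
      unfolding M_def by blast
    then show "x + y \<in> M" unfolding M_def using Kadd
      by (intro CollectI exI[of _ "a + a'"] exI[of _ "b + b'"]) (auto simp: algebra_simps)
  next
    fix c :: real and x assume "x \<in> M"
    then obtain a b where ab: "x = a - b" "a \<in> K" "b \<in> K" unfolding M_def by blast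
    show "c *\<^sub>R x \<in> M"
    proof (cases "c \<ge> 0")
      case True
      then show ?thesis unfolding M_def using ab Kmul
        by (intro CollectI exI[of _ "c *\<^sub>R a"] exI[of _ "c *\<^sub>R b"]) (auto simp: algebra_simps)
    next
      case False
      have "(-c) *\<^sub>R b \<in> K" "(-c) *\<^sub>R a \<in> K" using Kmul ab False by (auto simp del: scaleR_minus_left)
      moreover have "c *\<^sub>R x = (-c) *\<^sub>R b - (-c) *\<^sub>R a" using ab(1) by (simp add: scaleR_diff_right)
      ultimately show ?thesis unfolding M_def by blast
    qed
  qed
  have "closed M" using closed_subspace[OF sub] .
  moreover have "convex M" using subspace_imp_convex[OF sub] .
  ultimately obtain a b where ab: "a \<bullet> w < b" "\<forall>x\<in>M. b < a \<bullet> x"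
    using separating_hyperplane_closed_point[of M w] w unfolding M_def by blast
  have b0: "b < 0" using ab(2) subspace_0[OF sub] by force
  have ax: "a \<bullet> x = 0" if "x \<in> M" for x
  proof (rule ccontr)
    assume nz: "a \<bullet> x \<noteq> 0"
    define c where "c = (b - 1) / (a \<bullet> x)"
    have "c *\<^sub>R x \<in> M" using subspace_scale[OF sub that] .
    then have "b < a \<bullet> (c *\<^sub>R x)" using ab(2) by blast
    also have "a \<bullet> (c *\<^sub>R x) = b - 1" unfolding c_def using nz by simp
    finally show False by simp
  qed
  have aw: "a \<bullet> w < 0" using ab(1) b0 by simp
  define e where "e = (1 / (a \<bullet> w)) *\<^sub>R a"
  have "e \<bullet> w = 1" unfolding e_def using aw by simp
  moreover have "e \<bullet> k = 0" if "k \<in> K" for k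
  proof -
    have "k \<in> M" unfolding M_def using that K0 by (intro CollectI exI[of _ k] exI[of _ 0]) auto
    then show ?thesis unfolding e_def using ax by simp
  qed
  ultimately show ?thesis by blast
qed

lemma farkas_hm:
  fixes C Ds :: "'a::euclidean_space set"
  assumes finC: "finite C" "C \<noteq> {}" and finD: "finite Ds"
    and nn: "\<forall>h. inT Ds h \<longrightarrow> hm C h \<ge> 0"
    and eK: "\<forall>k. inT Ds k \<and> hm C k \<le> 0 \<longrightarrow> e \<bullet> k \<le> 0"
  shows "\<exists>\<sigma>>0. \<forall>y. inT Ds y \<longrightarrow> \<sigma> * (e \<bullet> y) \<le> hm C y"
proof -
  define G where "G = C \<union> Ds"
  define CC where "CC = convex_cone hull G"
  have eCC: "e \<in> CC"
  proof (rule ccontr)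
    assume ne: "e \<notin> CC"
    have "closed CC" unfolding CC_def G_def using finC finD by (intro closed_convex_cone_hull) auto
    moreover have "convex CC" unfolding CC_def by (rule convex_convex_cone_hull)
    ultimately obtain a b where ab: "a \<bullet> e < b" "\<forall>x\<in>CC. b < a \<bullet> x"
      using separating_hyperplane_closed_point[of CC e] ne by blast
    have b0: "b < 0" using ab(2) convex_cone_hull_contains_0[of G] unfolding CC_def by force
    have as: "a \<bullet> s \<ge> 0" if "s \<in> G" for s
    proof (rule ccontr)
      assume "\<not> a \<bullet> s \<ge> 0"
      then have neg: "a \<bullet> s < 0" by simp
      define c where "c = b / (a \<bullet> s)"
      have c0: "c \<ge> 0" unfolding c_def using neg b0 by (simp add: divide_nonpos_neg)
      have "s \<in> CC" unfolding CC_def using that by (simp add: hull_inc)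
      then have "c *\<^sub>R s \<in> CC" unfolding CC_def using c0 by (rule convex_cone_hull_mul)
      then have "b < a \<bullet> (c *\<^sub>R s)" using ab(2) by blast
      also have "a \<bullet> (c *\<^sub>R s) = b" unfolding c_def using neg by simp
      finally show False by simp
    qed
    have "inT Ds (-a)" unfolding inT_def using as unfolding G_def by (auto simp: inner_commute)
    moreover have "hm C (-a) \<le> 0" using as finC unfolding G_def by (subst hm_le_iff) (auto simp: inner_commute)
    ultimately have "e \<bullet> (-a) \<le> 0" using eK by blast
    then show False using ab(1) b0 by (simp add: inner_commute)
  qed
  define P where "P = {x. \<exists>\<alpha>\<ge>0. \<forall>y. inT Ds y \<longrightarrow> x \<bullet> y \<le> \<alpha> * hm C y}"
  have GP: "G \<subseteq> P"
  proof
    fix s assume "s \<in> G"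
    then have "s \<bullet> y \<le> 1 * hm C y" if "inT Ds y" for y
      using that hm_ge[OF finC(1)] nn unfolding G_def inT_def by fastforce
    then show "s \<in> P" unfolding P_def by (intro CollectI exI[of _ 1]) auto
  qed
  have cP: "convex_cone P" unfolding convex_cone_iff
  proof (intro conjI ballI allI impI)
    show "0 \<in> P" unfolding P_def using nn by (intro CollectI exI[of _ 0]) auto
  next
    fix x y assume "x \<in> P" "y \<in> P"
    then obtain \<alpha> \<beta> where a: "\<alpha> \<ge> 0" "\<forall>z. inT Ds z \<longrightarrow> x \<bullet> z \<le> \<alpha> * hm C z"
      and b: "\<beta> \<ge> 0" "\<forall>z. inT Ds z \<longrightarrow> y \<bullet> z \<le> \<beta> * hm C z" unfolding P_def by blast
    show "x + y \<in> P" unfolding P_def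
      using a b by (intro CollectI exI[of _ "\<alpha> + \<beta>"]) (auto simp: inner_add_left distrib_right intro: add_mono)
  next
    fix x and c :: real assume "x \<in> P" "c \<ge> 0"
    then obtain \<alpha> where a: "\<alpha> \<ge> 0" "\<forall>z. inT Ds z \<longrightarrow> x \<bullet> z \<le> \<alpha> * hm C z" unfolding P_def by blast
    have "(c *\<^sub>R x) \<bullet> z \<le> (c * \<alpha>) * hm C z" if "inT Ds z" for z
      using mult_left_mono[OF a(2)[rule_format, OF that] \<open>c \<ge> 0\<close>] by (simp add: mult.assoc)
    then show "c *\<^sub>R x \<in> P" unfolding P_def using a(1) \<open>c \<ge> 0\<close>
      by (intro CollectI exI[of _ "c * \<alpha>"]) auto
  qed
  have "CC \<subseteq> P" unfolding CC_def using GP cP by (rule hull_minimal)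
  then obtain \<alpha> where a: "\<alpha> \<ge> 0" "\<forall>y. inT Ds y \<longrightarrow> e \<bullet> y \<le> \<alpha> * hm C y"
    using eCC unfolding P_def by blast
  show ?thesis
  proof (intro exI[of _ "1 / (\<alpha> + 1)"] conjI allI impI)
    show "1 / (\<alpha> + 1) > 0" using a(1) by simp
    fix y assume y: "inT Ds y"
    have "e \<bullet> y \<le> \<alpha> * hm C y" using a(2) y by blast
    also have "\<dots> \<le> (\<alpha> + 1) * hm C y" using nn y by (simp add: distrib_right)
    finally show "1 / (\<alpha> + 1) * (e \<bullet> y) \<le> hm C y" using a(1) by (simp add: field_simps)
  qed
qed

lemma face_eps:
  fixes C Ds :: "'a::euclidean_space set"
  assumes finC: "finite C" and finD: "finite Ds"
  shows "\<exists>\<epsilon>>0. \<forall>IS\<in>Pow C \<times> Pow Ds. \<forall>\<mu>::'a. norm \<mu> < \<epsilon> \<longrightarrow>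
     ((fst IS \<noteq> {} \<and> (\<exists>y. inT (snd IS) y \<and> hm (fst IS) y < 0)) \<longrightarrow> \<not> (\<forall>h. inT (snd IS) h \<longrightarrow> \<mu> \<bullet> h \<le> hm (fst IS) h))"
proof (rule finite_radius)
  show "finite (Pow C \<times> Pow Ds)" using finC finD by simp
  show "\<forall>IS\<in>Pow C \<times> Pow Ds. \<exists>e>0. \<forall>\<mu>::'a. norm \<mu> < e \<longrightarrow>
     ((fst IS \<noteq> {} \<and> (\<exists>y. inT (snd IS) y \<and> hm (fst IS) y < 0)) \<longrightarrow> \<not> (\<forall>h. inT (snd IS) h \<longrightarrow> \<mu> \<bullet> h \<le> hm (fst IS) h))"
  proof
    fix IS assume IS: "IS \<in> Pow C \<times> Pow Ds"
    obtain I S where IS': "IS = (I, S)" by (cases IS)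
    have finI: "finite I" using IS IS' finC by (auto intro: finite_subset)
    show "\<exists>e>0. \<forall>\<mu>::'a. norm \<mu> < e \<longrightarrow>
     ((fst IS \<noteq> {} \<and> (\<exists>y. inT (snd IS) y \<and> hm (fst IS) y < 0)) \<longrightarrow> \<not> (\<forall>h. inT (snd IS) h \<longrightarrow> \<mu> \<bullet> h \<le> hm (fst IS) h))"
    proof (cases "I \<noteq> {} \<and> (\<exists>y. inT S y \<and> hm I y < 0)")
      case False
      then show ?thesis using IS' by (intro exI[of _ 1]) auto
    next
      case True
      then obtain y where y: "inT S y" "hm I y < 0" and Ine: "I \<noteq> {}" by blast
      have yne: "y \<noteq> 0" using y(2) hm_zero[OF finI Ine] by auto
      then have ny: "norm y > 0" by simp
      show ?thesis
      proof (intro exI[of _ "- hm I y / norm y"] conjI allI impI)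
        show "- hm I y / norm y > 0" using y(2) ny by (intro divide_pos_pos) auto
        fix \<mu> :: 'a assume mu: "norm \<mu> < - hm I y / norm y"
        show "\<not> (\<forall>h. inT (snd IS) h \<longrightarrow> \<mu> \<bullet> h \<le> hm (fst IS) h)"
        proof
          assume "\<forall>h. inT (snd IS) h \<longrightarrow> \<mu> \<bullet> h \<le> hm (fst IS) h"
          then have "\<mu> \<bullet> y \<le> hm I y" using y(1) IS' by simp
          moreover have "- (\<mu> \<bullet> y) \<le> norm \<mu> * norm y"
            using norm_cauchy_schwarz[of "-\<mu>" y] by simp
          moreover have "norm \<mu> * norm y < - hm I y" using mu ny by (simp add: field_simps)
          ultimately show False by linarith
        qed
      qed
    qed
  qed
qed




definition sdQ :: "('a::real_inner \<Rightarrow> ereal) \<Rightarrow> (real \<times> 'a) \<times> 'a \<times> 'a \<Rightarrow> ereal" where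
  "sdQ f = (\<lambda>((t, w'), (x, v)). second_diff_quot f x v t w')"

lemma sdQ_simp [simp]: "sdQ f ((t, w'), (x, v)) = second_diff_quot f x v t w'"
  unfolding sdQ_def by simp

lemma sss_Q: "strict_second_subderiv f xb vb w =
   Liminf ((at_right (0::real) \<times>\<^sub>F nhds w) \<times>\<^sub>F attentive_filter f xb vb) (sdQ f)"
  unfolding strict_second_subderiv_def sdQ_def by (rule refl)

lemma sdq_nonneg:
  assumes "(x, v) \<in> gph_subdiff g" "t > 0"
  shows "second_diff_quot g x v t w \<ge> 0"
proof -
  have vs: "v \<in> subdiff g x" using assms(1) unfolding gph_subdiff_def by simp
  obtain a where a: "g x = ereal a" using subdiffD(1)[OF vs] by (cases "g x") auto
  have ge: "g (x + t *\<^sub>R w) \<ge> ereal a + ereal (v \<bullet> (x + t *\<^sub>R w - x))" using subdiffD(2)[OF vs, of "x + t *\<^sub>R w"] a by simp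
  show ?thesis
  proof (cases "g (x + t *\<^sub>R w)")
    case (real b)
    then have "b \<ge> a + t * (v \<bullet> w)" using ge by simp
    then have "(b - a - t * (v \<bullet> w)) / (t\<^sup>2 / 2) \<ge> 0" using assms(2) by simp
    then show ?thesis unfolding second_diff_quot_def using real a assms(2) by simp
  next
    case PInf
    then show ?thesis unfolding second_diff_quot_def using a assms(2) by simp
  next
    case MInf
    then show ?thesis using ge by simp
  qed
qed

lemma sdq_val:
  assumes "g x = ereal a" "g (x + t *\<^sub>R w) = ereal b" "t > 0"
  shows "second_diff_quot g x v t w = ereal ((b - a - t * (v \<bullet> w)) / (t\<^sup>2 / 2))"
  unfolding second_diff_quot_def using assms by simp

lemma sdq_inf:
  assumes "g x = ereal a" "g (x + t *\<^sub>R w) = \<infinity>" "t > 0"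
  shows "second_diff_quot g x v t w = \<infinity>"
  unfolding second_diff_quot_def using assms by simp

lemma attentive_le:
  "attentive_filter f xb vb \<le> nhds (xb, vb)"
  "attentive_filter f xb vb \<le> principal (gph_subdiff f)"
  unfolding attentive_filter_def by (auto intro: le_infI1)

lemma ev_attentive_gph: "eventually (\<lambda>p. p \<in> gph_subdiff f) (attentive_filter f xb vb)"
  using filter_leD[OF attentive_le(2), of "\<lambda>p. p \<in> gph_subdiff f"] by (simp add: eventually_principal)

lemma ev_attentive_nhds: "eventually P (nhds (xb, vb)) \<Longrightarrow> eventually P (attentive_filter f xb vb)"
  using filter_leD[OF attentive_le(1)] by blast

context
  fixes g :: "'a::euclidean_space \<Rightarrow> ereal" and C Ds :: "'a set" and r gz :: real and zb lb :: 'a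
  assumes finC: "finite C" "C \<noteq> {}" and finD: "finite Ds" and r: "r > 0"
    and gz: "g zb = ereal gz"
    and rep: "\<forall>h. norm h < r \<longrightarrow> g (zb + h) = ereal (gz + lb \<bullet> h) + HF C Ds h"
    and nn: "\<forall>h. inT Ds h \<longrightarrow> hm C h \<ge> 0"
    and hgph: "(zb, lb) \<in> gph_subdiff g"
begin

lemma lbsub: "lb \<in> subdiff g zb" using hgph unfolding gph_subdiff_def by simp

lemma sss_KK:
  assumes w1: "inT Ds w1" "hm C w1 \<le> 0" and w2: "inT Ds w2" "hm C w2 \<le> 0"
  shows "strict_second_subderiv g zb lb (w1 - w2) = 0"
proof -
  define w where "w = w1 - w2"
  have h1: "hm C w1 = 0" "hm C w2 = 0" using w1 w2 nn by (auto intro: antisym)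
  have h12: "inT Ds (w1 + w2)" "hm C (w1 + w2) = 0"
    using inT_add[OF w1(1) w2(1)] hm_add[OF finC, of w1 w2] h1 nn by (auto intro: antisym)
  define bd where "bd = r / (norm w1 + norm w2 + 1)"
  have np: "norm w1 + norm w2 + 1 > 0" using norm_ge_zero[of w1] norm_ge_zero[of w2] by linarith
  have bd: "bd > 0" unfolding bd_def using r np by simp
  have gx: "g (zb + s *\<^sub>R w2) = ereal (gz + s * (lb \<bullet> w2))" if "0 < s" "s < bd" for s
  proof -
    have "norm (s *\<^sub>R w2) = s * norm w2" using that by simp
    also have "\<dots> \<le> s * (norm w1 + norm w2 + 1)" using that by (intro mult_left_mono) auto
    also have "\<dots> < r" using that np unfolding bd_def by (simp add: field_simps)
    finally have "norm (s *\<^sub>R w2) < r" .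
    moreover have "HF C Ds (s *\<^sub>R w2) = 0"
      using HF_scale[OF finC that(1), of Ds w2] w2 h1 unfolding HF_def by simp
    ultimately show ?thesis using rep by simp
  qed
  have gxt: "g (zb + s *\<^sub>R w2 + (s/2) *\<^sub>R w) = ereal (gz + (s/2) * (lb \<bullet> (w1 + w2)))" if "0 < s" "s < bd" for s
  proof -
    have eq: "zb + s *\<^sub>R w2 + (s/2) *\<^sub>R w = zb + (s/2) *\<^sub>R (w1 + w2)"
    proof -
      have "s *\<^sub>R w2 = (s/2) *\<^sub>R w2 + (s/2) *\<^sub>R w2" by (metis field_sum_of_halves scaleR_add_left)
      then show ?thesis unfolding w_def by (simp add: algebra_simps scaleR_add_right scaleR_diff_right)
    qed
    have "norm ((s/2) *\<^sub>R (w1 + w2)) = (s/2) * norm (w1 + w2)" using that by simp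
    also have "\<dots> \<le> (s/2) * (norm w1 + norm w2 + 1)"
      using that norm_triangle_ineq[of w1 w2] by (intro mult_left_mono) auto
    also have "\<dots> < r" using that np r unfolding bd_def by (simp add: field_simps)
    finally have nr: "norm ((s/2) *\<^sub>R (w1 + w2)) < r" .
    have "HF C Ds ((s/2) *\<^sub>R (w1 + w2)) = 0"
      using HF_scale[OF finC, of "s/2" Ds "w1 + w2"] that h12 unfolding HF_def by simp
    then show ?thesis unfolding eq using rep nr by simp
  qed
  have ingph: "(zb + s *\<^sub>R w2, lb) \<in> gph_subdiff g" if "0 < s" "s < bd" for s
  proof -
    have "g y \<ge> g (zb + s *\<^sub>R w2) + ereal (lb \<bullet> (y - (zb + s *\<^sub>R w2)))" for y
    proof -
      have "g y \<ge> g zb + ereal (lb \<bullet> (y - zb))" by (rule subdiffD(2)[OF lbsub])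
      moreover have "g (zb + s *\<^sub>R w2) + ereal (lb \<bullet> (y - (zb + s *\<^sub>R w2))) = g zb + ereal (lb \<bullet> (y - zb))"
        using gx[OF that] gz by (simp add: inner_diff_right inner_add_right)
      ultimately show ?thesis by simp
    qed
    then show ?thesis unfolding gph_subdiff_def subdiff_def using gx[OF that] by simp
  qed
  have path: "filterlim (\<lambda>s. (zb + s *\<^sub>R w2, lb)) (attentive_filter g zb lb) (at_right 0)"
    unfolding attentive_filter_def filterlim_inf filterlim_principal filterlim_filtercomap_iff
  proof (intro conjI)
    have "((\<lambda>s. (zb + s *\<^sub>R w2, lb)) \<longlongrightarrow> (zb + 0 *\<^sub>R w2, lb)) (at_right (0::real))"
      by (intro tendsto_intros)
    then show "filterlim (\<lambda>s. (zb + s *\<^sub>R w2, lb)) (nhds (zb, lb)) (at_right 0)" by simp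
    show "eventually (\<lambda>s. (zb + s *\<^sub>R w2, lb) \<in> gph_subdiff g) (at_right 0)"
      using eventually_at_right_real[OF bd] by eventually_elim (use ingph in auto)
    have "((\<lambda>s. ereal (gz + s * (lb \<bullet> w2))) \<longlongrightarrow> ereal (gz + 0 * (lb \<bullet> w2))) (at_right (0::real))"
      by (intro tendsto_intros)
    then have lim: "((\<lambda>s. ereal (gz + s * (lb \<bullet> w2))) \<longlongrightarrow> g zb) (at_right (0::real))" using gz by simp
    have "eventually (\<lambda>s. ereal (gz + s * (lb \<bullet> w2)) = ((\<lambda>(x, v). g x) \<circ> (\<lambda>s. (zb + s *\<^sub>R w2, lb))) s) (at_right (0::real))"
      using eventually_at_right_real[OF bd] by eventually_elim (use gx in auto)
    then show "filterlim ((\<lambda>(x, v). g x) \<circ> (\<lambda>s. (zb + s *\<^sub>R w2, lb))) (nhds (g zb)) (at_right 0)"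
      using lim by (rule tendsto_cong[THEN iffD1])
  qed
  have ge: "strict_second_subderiv g zb lb w \<ge> 0" unfolding sss_Q
  proof (rule Liminf_bounded)
    have "eventually (\<lambda>z. (fst (fst z) \<in> {0<..<1::real} \<and> True) \<and> snd z \<in> gph_subdiff g)
        ((at_right (0::real) \<times>\<^sub>F nhds w) \<times>\<^sub>F attentive_filter g zb lb)"
      by (intro eventually_prodI2 eventually_at_right_real ev_attentive_gph) auto
    then show "eventually (\<lambda>z. 0 \<le> sdQ g z)
        ((at_right (0::real) \<times>\<^sub>F nhds w) \<times>\<^sub>F attentive_filter g zb lb)"
    proof (rule eventually_mono)
      fix z :: "(real \<times> 'a) \<times> 'a \<times> 'a"
      assume a: "(fst (fst z) \<in> {0<..<1::real} \<and> True) \<and> snd z \<in> gph_subdiff g"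
      obtain t w' x v where z: "z = ((t, w'), (x, v))" by (metis prod.collapse)
      show "0 \<le> sdQ g z"
        using a z sdq_nonneg[of x v g t w'] by simp
    qed
  qed
  have le: "strict_second_subderiv g zb lb w \<le> 0" unfolding sss_Q
  proof (rule Liminf_le_frequently, rule frequently_prodI)
    fix Pf Pg assume ef: "eventually Pf (at_right (0::real) \<times>\<^sub>F nhds w)"
      and eg: "eventually Pg (attentive_filter g zb lb)"
    obtain Pt Pw where P: "eventually Pt (at_right (0::real))" "eventually Pw (nhds w)"
      "\<forall>t w'. Pt t \<longrightarrow> Pw w' \<longrightarrow> Pf (t, w')"
      using ef unfolding eventually_prod_filter by blast
    have Pww: "Pw w" using P(2) by (rule eventually_nhds_x_imp_x)
    obtain \<delta> where \<delta>: "\<delta> > 0" "\<forall>t>0. t < \<delta> \<longrightarrow> Pt t"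
      using P(1) unfolding eventually_at_right_field by auto
    have "eventually (\<lambda>s. Pg (zb + s *\<^sub>R w2, lb)) (at_right 0)"
      using path eg unfolding filterlim_iff by blast
    moreover have "eventually (\<lambda>s. s \<in> {0<..<min bd \<delta>}) (at_right (0::real))"
      using bd \<delta> by (intro eventually_at_right_real) simp
    ultimately have "eventually (\<lambda>s. Pg (zb + s *\<^sub>R w2, lb) \<and> s \<in> {0<..<min bd \<delta>}) (at_right (0::real))"
      by (rule eventually_conj)
    then obtain s where s: "Pg (zb + s *\<^sub>R w2, lb)" "0 < s" "s < bd" "s < \<delta>"
      using eventually_happens'[OF trivial_limit_at_right_real] by force
    have Pf: "Pf (s/2, w)" using P(3) \<delta>(2) s Pww by auto
    have "second_diff_quot g (zb + s *\<^sub>R w2) lb (s/2) w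
        = ereal ((gz + (s/2) * (lb \<bullet> (w1 + w2)) - (gz + s * (lb \<bullet> w2)) - (s/2) * (lb \<bullet> w)) / ((s/2)\<^sup>2 / 2))"
      using sdq_val[OF gx[OF s(2,3)] gxt[OF s(2,3)]] s(2) by simp
    also have "\<dots> = 0" unfolding w_def by (simp add: inner_add_right inner_diff_right algebra_simps)
    finally have "second_diff_quot g (zb + s *\<^sub>R w2) lb (s/2) w \<le> 0" by simp
    then show "\<exists>x y. Pf x \<and> Pg y \<and> sdQ g (x, y) \<le> 0"
      using Pf s(1) by (intro exI[of _ "(s/2, w)"] exI[of _ "(zb + s *\<^sub>R w2, lb)"]) simp
  qed
  show ?thesis using ge le unfolding w_def by simp
qed


lemma sss_notKK:
  assumes w: "w \<notin> {a - b | a b. a \<in> {k. inT Ds k \<and> hm C k \<le> 0} \<and> b \<in> {k. inT Ds k \<and> hm C k \<le> 0}}"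
  shows "strict_second_subderiv g zb lb w = \<infinity>"
proof -
  define K where "K = {k. inT Ds k \<and> hm C k \<le> 0}"
  have K0: "0 \<in> K" unfolding K_def inT_def using hm_zero[OF finC] by simp
  have Kadd: "\<forall>a\<in>K. \<forall>b\<in>K. a + b \<in> K"
  proof (intro ballI)
    fix a b assume ab: "a \<in> K" "b \<in> K"
    have "hm C (a + b) \<le> hm C a + hm C b" by (rule hm_add[OF finC])
    then show "a + b \<in> K" using ab unfolding K_def by (auto intro: inT_add)
  qed
  have Kmul: "\<forall>a\<in>K. \<forall>c\<ge>0. c *\<^sub>R a \<in> K" unfolding K_def
    by (auto intro: inT_scale simp: hm_scale[OF finC] mult_nonneg_nonpos)
  obtain e where e: "e \<bullet> w = 1" "\<forall>k\<in>K. e \<bullet> k = 0"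
    using sub_sep[OF K0 Kadd Kmul] w unfolding K_def by blast
  obtain \<sigma> where \<sigma>: "\<sigma> > 0" "\<forall>y. inT Ds y \<longrightarrow> \<sigma> * (e \<bullet> y) \<le> hm C y"
  proof -
    have eK: "\<forall>k. inT Ds k \<and> hm C k \<le> 0 \<longrightarrow> e \<bullet> k \<le> 0" using e(2) unfolding K_def by simp
    show ?thesis using farkas_hm[OF finC finD nn eK] that by blast
  qed
  obtain \<epsilon> where \<epsilon>: "\<epsilon> > 0" "\<forall>IS\<in>Pow C \<times> Pow Ds. \<forall>\<mu>::'a. norm \<mu> < \<epsilon> \<longrightarrow>
     ((fst IS \<noteq> {} \<and> (\<exists>y. inT (snd IS) y \<and> hm (fst IS) y < 0)) \<longrightarrow> \<not> (\<forall>h. inT (snd IS) h \<longrightarrow> \<mu> \<bullet> h \<le> hm (fst IS) h))"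
    using face_eps[OF finC(1) finD] by blast
  define nw where "nw = norm w + 1"
  have nw: "nw > 0" unfolding nw_def using norm_ge_zero[of w] by linarith
  define \<delta> where "\<delta> = min \<epsilon> (\<sigma> / (4 * nw))"
  have \<delta>: "\<delta> > 0" unfolding \<delta>_def using \<epsilon> \<sigma> nw by simp
  have pt: "ereal (\<sigma> / (4 * t)) \<le> sdQ g ((t, w'), (x, v))"
    if t: "t > 0" "t * nw < r / 2" and w': "norm w' < nw" "e \<bullet> w' > 1/2"
      and xv: "(x, v) \<in> gph_subdiff g" "norm (x - zb) < r / 2" "norm (v - lb) < \<delta>" for t w' x v
  proof -
    define u where "u = x - zb"
    define \<mu> where "\<mu> = v - lb"
    have xu: "x = zb + u" unfolding u_def by simp
    have vmu: "v = lb + \<mu>" unfolding \<mu>_def by simp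
    have nu: "norm u < r / 2" using xv(2) unfolding u_def .
    have vsub: "v \<in> subdiff g x" using xv(1) unfolding gph_subdiff_def by simp
    have gxfin: "\<bar>g x\<bar> \<noteq> \<infinity>" using subdiffD(1)[OF vsub] .
    have gx0: "g x = ereal (gz + lb \<bullet> u) + HF C Ds u" using rep nu xu r by simp
    have uT: "inT Ds u"
    proof (rule ccontr)
      assume "\<not> inT Ds u"
      then have "g x = \<infinity>" using gx0 unfolding HF_def by simp
      then show False using gxfin by simp
    qed
    have gx: "g x = ereal (gz + lb \<bullet> u + hm C u)" using gx0 uT unfolding HF_def by simp
    have locsub: "hm C u + \<mu> \<bullet> (h - u) \<le> hm C h" if "norm h < r" "inT Ds h" for h
    proof -
      have "g (zb + h) \<ge> g x + ereal (v \<bullet> (zb + h - x))" by (rule subdiffD(2)[OF vsub])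
      moreover have "g (zb + h) = ereal (gz + lb \<bullet> h + hm C h)" using rep that unfolding HF_def by simp
      ultimately have "gz + lb \<bullet> h + hm C h \<ge> gz + lb \<bullet> u + hm C u + v \<bullet> (h - u)"
        using gx xu by simp
      then show ?thesis unfolding vmu by (simp add: inner_add_left inner_diff_right)
    qed
    have hmu: "hm C u = \<mu> \<bullet> u"
    proof -
      have n1: "norm ((3/2) *\<^sub>R u) < r" using nu r by simp
      have n2: "norm ((1/2) *\<^sub>R u) < r" using nu r by simp
      have "hm C u + \<mu> \<bullet> ((3/2) *\<^sub>R u - u) \<le> hm C ((3/2) *\<^sub>R u)"
        using locsub[OF n1 inT_scale[OF _ uT]] by simp
      moreover have "hm C u + \<mu> \<bullet> ((1/2) *\<^sub>R u - u) \<le> hm C ((1/2) *\<^sub>R u)"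
        using locsub[OF n2 inT_scale[OF _ uT]] by simp
      moreover have "hm C ((3/2) *\<^sub>R u) = (3/2) * hm C u" "hm C ((1/2) *\<^sub>R u) = (1/2) * hm C u"
        using hm_scale[OF finC] by auto
      moreover have "(3/2) *\<^sub>R u - u = (1/2) *\<^sub>R u" using scaleR_diff_left[of "3/2" 1 u] by simp
      moreover have "(1/2) *\<^sub>R u - u = (-1/2) *\<^sub>R u" using scaleR_diff_left[of "1/2" 1 u] by simp
      ultimately show ?thesis by (simp add: inner_scaleR_right)
    qed
    have glob: "\<mu> \<bullet> y \<le> hm C y" if "inT Ds y" for y
    proof -
      obtain s where s: "s > 0" "norm (s *\<^sub>R y) < r" using small_scale[OF r] by blast
      have "hm C u + \<mu> \<bullet> (s *\<^sub>R y - u) \<le> hm C (s *\<^sub>R y)"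
        using locsub[OF s(2) inT_scale[OF _ that]] s(1) by simp
      then have "s * (\<mu> \<bullet> y) \<le> s * hm C y" using hmu hm_scale[OF finC, of s y] s(1)
        by (simp add: inner_diff_right)
      then show ?thesis using s(1) by simp
    qed
    define Iu where "Iu = {c\<in>C. c \<bullet> u = hm C u}"
    define Su where "Su = {d\<in>Ds. d \<bullet> u = 0}"
    have finIu: "finite Iu" "Iu \<noteq> {}"
    proof -
      show "finite Iu" unfolding Iu_def using finC by simp
      obtain c where "c \<in> C" "hm C u = c \<bullet> u" using hm_in[OF finC] by blast
      then show "Iu \<noteq> {}" unfolding Iu_def by auto
    qed
    obtain ru where ru: "ru > 0" "\<forall>h. norm h < ru \<longrightarrow> HF C Ds (u + h) = ereal (hm C u) + HF Iu Su h"
      using HF_local[OF finC finD uT] unfolding Iu_def Su_def by blast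
    have subu: "\<mu> \<bullet> h \<le> hm Iu h" if hS: "inT Su h" for h
    proof -
      have mp: "min ru (r - norm u) > 0" using ru nu r by simp
      obtain s where s: "s > 0" "norm (s *\<^sub>R h) < min ru (r - norm u)" using small_scale[OF mp] by blast
      have "HF C Ds (u + s *\<^sub>R h) = ereal (hm C u) + HF Iu Su (s *\<^sub>R h)" using ru s by simp
      also have "HF Iu Su (s *\<^sub>R h) = ereal (hm Iu (s *\<^sub>R h))"
        unfolding HF_def using inT_scale[OF _ hS, of s] s(1) by simp
      finally have HFe: "HF C Ds (u + s *\<^sub>R h) = ereal (hm C u + hm Iu (s *\<^sub>R h))" by simp
      then have inTu: "inT Ds (u + s *\<^sub>R h)" unfolding HF_def by (auto split: if_splits)
      then have hmeq: "hm C (u + s *\<^sub>R h) = hm C u + hm Iu (s *\<^sub>R h)" using HFe unfolding HF_def by simp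
      have "norm (u + s *\<^sub>R h) \<le> norm u + norm (s *\<^sub>R h)" by (rule norm_triangle_ineq)
      also have "\<dots> < r" using s(2) by simp
      finally have "hm C u + \<mu> \<bullet> (u + s *\<^sub>R h - u) \<le> hm C (u + s *\<^sub>R h)" using locsub inTu by blast
      then have "s * (\<mu> \<bullet> h) \<le> s * hm Iu h" using hmeq hm_scale[OF finIu, of s h] s(1) by simp
      then show ?thesis using s(1) by simp
    qed
    have hmu0: "hm C u = 0"
    proof (rule ccontr)
      assume "hm C u \<noteq> 0"
      then have pos: "hm C u > 0" using nn uT by force
      have iS: "inT Su (-u)" unfolding inT_def Su_def by simp
      moreover have hI: "hm Iu (-u) < 0"
      proof -
        obtain c where "c \<in> Iu" "hm Iu (-u) = c \<bullet> (-u)" using hm_in[OF finIu] by blast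
        then show ?thesis using pos unfolding Iu_def by simp
      qed
      have mem: "(Iu, Su) \<in> Pow C \<times> Pow Ds" unfolding Iu_def Su_def by auto
      have nmu: "norm \<mu> < \<epsilon>" using xv(3) unfolding \<mu>_def \<delta>_def by simp
      have good: "Iu \<noteq> {} \<and> (\<exists>y. inT Su y \<and> hm Iu y < 0)" using finIu(2) iS hI by blast
      have "\<not> (\<forall>h. inT Su h \<longrightarrow> \<mu> \<bullet> h \<le> hm Iu h)"
        using \<epsilon>(2)[rule_format, OF mem nmu] good by simp
      then show False using subu by blast
    qed
    have uK: "u \<in> K" unfolding K_def using uT hmu0 by simp
    have eu: "e \<bullet> u = 0" using e(2) uK by blast
    have muu: "\<mu> \<bullet> u = 0" using hmu hmu0 by simp
    define z where "z = u + t *\<^sub>R w'"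
    have xz: "x + t *\<^sub>R w' = zb + z" unfolding z_def xu by simp
    have "norm z \<le> norm u + norm (t *\<^sub>R w')" unfolding z_def by (rule norm_triangle_ineq)
    also have "norm (t *\<^sub>R w') = t * norm w'" using t by simp
    also have "t * norm w' \<le> t * nw" using t w' by (intro mult_left_mono) auto
    finally have nz: "norm z < r" using nu t by simp
    show ?thesis
    proof (cases "inT Ds z")
      case False
      then have gi: "g (x + t *\<^sub>R w') = \<infinity>" using rep nz xz unfolding HF_def by simp
      have "sdQ g ((t, w'), (x, v)) = \<infinity>" using sdq_inf[OF gx gi t(1)] by simp
      then show ?thesis by simp
    next
      case True
      then have gxt: "g (x + t *\<^sub>R w') = ereal (gz + lb \<bullet> z + hm C z)" using rep nz xz unfolding HF_def by simp
      define N where "N = gz + lb \<bullet> z + hm C z - (gz + lb \<bullet> u + hm C u) - t * (v \<bullet> w')"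
      have sq: "sdQ g ((t, w'), (x, v)) = ereal (N / (t\<^sup>2 / 2))"
        using sdq_val[OF gx gxt t(1)] unfolding N_def by simp
      have Neq: "N = hm C z - t * (\<mu> \<bullet> w')"
      proof -
        have q1: "lb \<bullet> z = lb \<bullet> u + t * (lb \<bullet> w')" unfolding z_def by (simp add: inner_add_right)
        have q2: "t * (v \<bullet> w') = t * (lb \<bullet> w') + t * (\<mu> \<bullet> w')" unfolding vmu by (simp add: inner_add_left distrib_left)
        show ?thesis unfolding N_def using q1 q2 hmu0 by linarith
      qed
      have h1: "\<sigma> * (t * (e \<bullet> w')) \<le> hm C z" using \<sigma>(2)[rule_format, OF True] eu unfolding z_def by (simp add: inner_add_right)
      have h2: "t * (\<mu> \<bullet> w') \<le> hm C z" using glob[OF True] muu unfolding z_def by (simp add: inner_add_right)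
      have mw: "\<mu> \<bullet> w' \<le> \<sigma> / 4"
      proof -
        have "\<mu> \<bullet> w' \<le> norm \<mu> * norm w'" by (rule norm_cauchy_schwarz)
        also have "\<dots> \<le> (\<sigma> / (4 * nw)) * nw"
          using xv(3) w'(1) \<sigma>(1) nw unfolding \<mu>_def \<delta>_def by (intro mult_mono) auto
        also have "\<dots> = \<sigma> / 4" using nw by simp
        finally show ?thesis .
      qed
      have "\<sigma> * (t * (e \<bullet> w')) \<ge> \<sigma> * (t * (1/2))" using \<sigma>(1) t(1) w'(2) by simp
      have "N \<ge> t * \<sigma> / 8"
      proof -
        have a1: "\<sigma> * (t * (e \<bullet> w')) \<ge> \<sigma> * (t / 2)" using \<sigma>(1) t(1) w'(2) by simp
        have a2: "t * (\<mu> \<bullet> w') \<le> t * (\<sigma> / 4)" using mw t(1) by simp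
        have "2 * N \<ge> \<sigma> * (t * (e \<bullet> w')) + t * (\<mu> \<bullet> w') - 2 * t * (\<mu> \<bullet> w')" using Neq h1 h2 by linarith
        moreover have "\<sigma> * (t / 2) = (\<sigma> * t) / 2" "t * (\<sigma> / 4) = (\<sigma> * t) / 4" "t * \<sigma> / 8 = (\<sigma> * t) / 8"
          "2 * t * (\<mu> \<bullet> w') = 2 * (t * (\<mu> \<bullet> w'))" by simp_all
        ultimately show ?thesis using a1 a2 by linarith
      qed
      then have "N / (t\<^sup>2 / 2) \<ge> (t * \<sigma> / 8) / (t\<^sup>2 / 2)" using t(1) by (intro divide_right_mono) auto
      also have "(t * \<sigma> / 8) / (t\<^sup>2 / 2) = \<sigma> / (4 * t)" using t(1) by (simp add: field_simps power2_eq_square)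
      finally show ?thesis using sq by simp
    qed
  qed
  have "\<infinity> \<le> strict_second_subderiv g zb lb w" unfolding sss_Q le_Liminf_iff
  proof (intro allI impI)
    fix y :: ereal assume "y < \<infinity>"
    then obtain M where M: "M > 0" "y < ereal M"
    proof (cases y)
      case (real yr)
      then show ?thesis using that[of "\<bar>yr\<bar> + 1"] by simp
    next
      case PInf
      then show ?thesis using \<open>y < \<infinity>\<close> by simp
    next
      case MInf
      then show ?thesis using that[of 1] by simp
    qed
    define bt where "bt = min (r / (2 * nw)) (\<sigma> / (4 * M))"
    have bt: "bt > 0" unfolding bt_def using r nw \<sigma> M by simp
    have ev1: "eventually (\<lambda>t. t \<in> {0<..<bt}) (at_right (0::real))" using bt by (rule eventually_at_right_real)
    have "eventually (\<lambda>w'. e \<bullet> w' > 1/2) (nhds w)" using ev_inner_gt[of "1/2" e w] e(1) by simp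
    then have ev2: "eventually (\<lambda>w'. norm w' < nw \<and> e \<bullet> w' > 1/2) (nhds w)"
      unfolding nw_def using ev_norm_lt[of w] by (intro eventually_conj)
    have ev3: "eventually (\<lambda>p. norm (fst p - zb) < r / 2 \<and> norm (snd p - lb) < \<delta>) (nhds (zb, lb))"
    proof -
      have l1: "((\<lambda>p. norm (fst p - zb)) \<longlongrightarrow> norm (fst (zb, lb) - zb)) (nhds (zb, lb))"
        by (intro tendsto_intros filterlim_ident)
      have l2: "((\<lambda>p. norm (snd p - lb)) \<longlongrightarrow> norm (snd (zb, lb) - lb)) (nhds (zb, lb))"
        by (intro tendsto_intros filterlim_ident)
      have "eventually (\<lambda>p. norm (fst p - zb) < r / 2) (nhds (zb, lb))"
        using order_tendstoD(2)[OF l1, of "r/2"] r by simp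
      moreover have "eventually (\<lambda>p. norm (snd p - lb) < \<delta>) (nhds (zb, lb))"
        using order_tendstoD(2)[OF l2, of \<delta>] \<delta> by simp
      ultimately show ?thesis by (rule eventually_conj)
    qed
    have ev4: "eventually (\<lambda>p. p \<in> gph_subdiff g \<and> (norm (fst p - zb) < r / 2 \<and> norm (snd p - lb) < \<delta>)) (attentive_filter g zb lb)"
      using ev_attentive_gph ev_attentive_nhds[OF ev3] by (rule eventually_conj)
    have "eventually (\<lambda>z. (fst (fst z) \<in> {0<..<bt} \<and> (norm (snd (fst z)) < nw \<and> e \<bullet> snd (fst z) > 1/2))
        \<and> (snd z \<in> gph_subdiff g \<and> (norm (fst (snd z) - zb) < r / 2 \<and> norm (snd (snd z) - lb) < \<delta>)))
       ((at_right (0::real) \<times>\<^sub>F nhds w) \<times>\<^sub>F attentive_filter g zb lb)"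
      by (intro eventually_prodI2 ev1 ev2 ev4)
    then show "eventually (\<lambda>z. y < sdQ g z) ((at_right (0::real) \<times>\<^sub>F nhds w) \<times>\<^sub>F attentive_filter g zb lb)"
    proof (rule eventually_mono)
      fix z :: "(real \<times> 'a) \<times> 'a \<times> 'a"
      assume a: "(fst (fst z) \<in> {0<..<bt} \<and> (norm (snd (fst z)) < nw \<and> e \<bullet> snd (fst z) > 1/2))
        \<and> (snd z \<in> gph_subdiff g \<and> (norm (fst (snd z) - zb) < r / 2 \<and> norm (snd (snd z) - lb) < \<delta>))"
      obtain t w' x v where z: "z = ((t, w'), (x, v))" by (metis prod.collapse)
      have t: "t > 0" "t < bt" using a z by auto
      have tnw: "t * nw < r / 2"
      proof -
        have "t < r / (2 * nw)" using t unfolding bt_def by simp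
        then show ?thesis using nw by (simp add: field_simps)
      qed
      have tM: "M < \<sigma> / (4 * t)"
      proof -
        have "t < \<sigma> / (4 * M)" using t unfolding bt_def by simp
        then show ?thesis using M(1) t(1) by (simp add: field_simps)
      qed
      have aa: "norm w' < nw" "e \<bullet> w' > 1/2" "(x, v) \<in> gph_subdiff g" "norm (x - zb) < r / 2" "norm (v - lb) < \<delta>"
        using a unfolding z by simp_all
      have sz: "ereal (\<sigma> / (4 * t)) \<le> sdQ g z"
        unfolding z by (rule pt[OF t(1) tnw aa])
      have "ereal M < ereal (\<sigma> / (4 * t))" using tM by simp
      with M(2) have "y < ereal (\<sigma> / (4 * t))" by (rule less_trans)
      then show "y < sdQ g z" using sz by (rule less_le_trans)
    qed
  qed
  then show ?thesis by simp
qed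

end




theorem proposition4p1:
  fixes g :: "'a::euclidean_space \<Rightarrow> ereal" and zb lb :: 'a
  assumes "polyhedral_fun g"
    and "(zb, lb) \<in> gph_subdiff g"
  shows "\<forall>w. strict_second_subderiv g zb lb w =
    indicator_fun {a - b | a b. a \<in> critical_cone g zb lb \<and> b \<in> critical_cone g zb lb} w"
proof -
  obtain C Ds r gz where H: "finite C" "C \<noteq> {}" "finite Ds" "r > 0" "g zb = ereal gz"
    "\<forall>h. norm h < r \<longrightarrow> g (zb + h) = ereal (gz + lb \<bullet> h) + HF C Ds h"
    "\<forall>h. inT Ds h \<longrightarrow> hm C h \<ge> 0"
    by (rule loc_setup[OF assms])
  have crit: "critical_cone g zb lb = {w. inT Ds w \<and> hm C w \<le> 0}"
    by (rule crit_char[OF H])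
  show ?thesis
  proof
    fix w
    show "strict_second_subderiv g zb lb w =
      indicator_fun {a - b | a b. a \<in> critical_cone g zb lb \<and> b \<in> critical_cone g zb lb} w"
    proof (cases "w \<in> {a - b | a b. a \<in> {k. inT Ds k \<and> hm C k \<le> 0} \<and> b \<in> {k. inT Ds k \<and> hm C k \<le> 0}}")
      case True
      then obtain a b where ab: "w = a - b" "inT Ds a" "hm C a \<le> 0" "inT Ds b" "hm C b \<le> 0"
        by (elim CollectE exE conjE) (rule that, assumption+)
      have "strict_second_subderiv g zb lb w = 0"
        unfolding ab(1) by (rule sss_KK[OF H assms(2) ab(2-5)])
      moreover have "w \<in> {a - b | a b. a \<in> critical_cone g zb lb \<and> b \<in> critical_cone g zb lb}"
        using True unfolding crit .
      ultimately show ?thesis unfolding indicator_fun_def by (simp only: if_P)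
    next
      case False
      have "strict_second_subderiv g zb lb w = \<infinity>"
        by (rule sss_notKK[OF H assms(2) False])
      moreover have "w \<notin> {a - b | a b. a \<in> critical_cone g zb lb \<and> b \<in> critical_cone g zb lb}"
        using False unfolding crit .
      ultimately show ?thesis unfolding indicator_fun_def by (simp only: if_not_P if_False)
    qed
  qed
qed


end
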